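(* For every integer $n \geq 1$, the discrete interval hypergraph $H_n$ satisfies $\mathrm{ch}_{cf}(H_n) \leq \lfloor \log_2 n \rfloor + 1$. That is, for every family $\{L_i\}_{i\in[n]}$ of sets of positive integers with $|L_i| \geq \lfloor \log_2 n\rfloor + 1$ for all $i$, there is a conflict-free coloring $C$ of $H_n$ with $C(i)\in L_i$ for all $i$.
   Context: For $n\ge 1$ let $[n]=\{1,\dots,n\}$ and for $s\le t$ in $[n]$ let $[s,t]=\{i : s\le i\le t\}$. The discrete interval hypergraph $H_n$ has vertex set $[n]$ and hyperedge set $\{[s,t] : s\le t,\ s,t\in[n]\}$. A coloring $C\colon V\to\mathbb{Z}_{>0}$ of a hypergraph $H=(V,\mathcal E)$ is conflict-free if every hyperedge $S\in\mathcal E$ contains a vertex whose color appears exactly once in $S$ (i.e., there is $i$ with $|S\cap C^{-1}(i)|=1$). Given a family $\mathcal L=\{L_v\}_{v\in V}$ of sets of positive integers, $H$ admits a coloring from $\mathcal L$ if the coloring satisfies $C(v)\in L_v$ for all $v$. $H$ is $k$-cf-choosable if for every family $\mathcal L$ with $|L_v|\ge k$ for all $v$, $H$ admits a conflict-free coloring from $\mathcal L$; the cf-choice number $\mathrm{ch}_{cf}(H)$ is the minimum such $k$. *)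

theory Defs
  imports Complex_Main
begin

definition interval_hypergraph_edges :: "nat \<Rightarrow> nat set set" where
  "interval_hypergraph_edges n = {{s..t} | s t. 1 \<le> s \<and> s \<le> t \<and> t \<le> n}"

definition conflict_free ::
  "'v set \<Rightarrow> 'v set set \<Rightarrow> ('v \<Rightarrow> nat) \<Rightarrow> bool" where
  "conflict_free V E C \<longleftrightarrow>
     (\<forall>v\<in>V. C v > 0) \<and>
     (\<forall>S\<in>E. \<exists>i. card (S \<inter> C -` {i}) = 1)"

definition colors_from ::
  "'v set \<Rightarrow> ('v \<Rightarrow> nat set) \<Rightarrow> ('v \<Rightarrow> nat) \<Rightarrow> bool" where
  "colors_from V L C \<longleftrightarrow> (\<forall>v\<in>V. C v \<in> L v)"

text \<open>|L v| >= k: an infinite list has size at least k for every k.\<close>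
definition cf_choosable ::
  "'v set \<Rightarrow> 'v set set \<Rightarrow> nat \<Rightarrow> bool" where
  "cf_choosable V E k \<longleftrightarrow>
     (\<forall>L. (\<forall>v\<in>V. L v \<subseteq> {0<..} \<and> (infinite (L v) \<or> card (L v) \<ge> k)) \<longrightarrow>
          (\<exists>C. conflict_free V E C \<and> colors_from V L C))"

end

theory Submission
  imports Defs
begin

lemma key:
  fixes L :: "nat \<Rightarrow> nat set"
  shows "b - a < 2 ^ j \<Longrightarrow> (\<forall>v\<in>{a..<b}. infinite (L v) \<or> card (L v) \<ge> j) \<Longrightarrow>
    \<exists>C. (\<forall>v\<in>{a..<b}. C v \<in> L v) \<and>
        (\<forall>s t. a \<le> s \<and> s \<le> t \<and> t < b \<longrightarrow> (\<exists>i. card ({s..t} \<inter> C -` {i}) = 1))"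
proof (induction j arbitrary: a b L)
  case 0
  then show ?case by auto
next
  case (Suc j)
  show ?case
  proof (cases "a < b")
    case False
    then show ?thesis by auto
  next
    case True
    define m where "m = (a + b) div 2"
    have am: "a \<le> m" "m < b" using True unfolding m_def by auto
    have "infinite (L m) \<or> card (L m) \<ge> Suc j" using Suc.prems(2) am by auto
    hence "L m \<noteq> {}" by auto
    then obtain c where c: "c \<in> L m" by blast
    define L' where "L' v = L v - {c}" for v
    have L': "infinite (L' v) \<or> card (L' v) \<ge> j" if "v \<in> {a..<b}" for v
    proof -
      have h: "infinite (L v) \<or> card (L v) \<ge> Suc j" using Suc.prems(2) that by auto
      show ?thesis
      proof (cases "finite (L v)")
        case True
        have "card (L v - {c}) \<ge> card (L v) - 1" using diff_card_le_card_Diff[OF finite.insertI[OF finite.emptyI, of c], of "L v"] by (cases "c \<in> L v") auto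
        then show ?thesis using h True by (auto simp: L'_def)
      qed (auto simp: L'_def)
    qed
    have l1: "m - a < 2 ^ j" using Suc.prems(1) unfolding m_def by auto
    have l2: "b - Suc m < 2 ^ j" using Suc.prems(1) unfolding m_def by auto
    obtain C1 where C1: "\<forall>v\<in>{a..<m}. C1 v \<in> L' v"
      "\<forall>s t. a \<le> s \<and> s \<le> t \<and> t < m \<longrightarrow> (\<exists>i. card ({s..t} \<inter> C1 -` {i}) = 1)"
      using Suc.IH[OF l1, of L'] L' am by fastforce
    obtain C2 where C2: "\<forall>v\<in>{Suc m..<b}. C2 v \<in> L' v"
      "\<forall>s t. Suc m \<le> s \<and> s \<le> t \<and> t < b \<longrightarrow> (\<exists>i. card ({s..t} \<inter> C2 -` {i}) = 1)"
      using Suc.IH[OF l2, of L'] L' am by fastforce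
    define C where "C v = (if v < m then C1 v else if v = m then c else C2 v)" for v
    have A: "\<forall>v\<in>{a..<b}. C v \<in> L v"
      using C1(1) C2(1) c unfolding C_def L'_def by auto
    have B: "\<exists>i. card ({s..t} \<inter> C -` {i}) = 1" if st: "a \<le> s" "s \<le> t" "t < b" for s t
    proof -
      consider "s \<le> m \<and> m \<le> t" | "t < m" | "m < s" by linarith
      then show ?thesis
      proof cases
        case 1
        have "{s..t} \<inter> C -` {c} = {m}"
        proof (rule set_eqI)
          fix v
          show "v \<in> {s..t} \<inter> C -` {c} \<longleftrightarrow> v \<in> {m}"
          proof
            assume v: "v \<in> {s..t} \<inter> C -` {c}"
            show "v \<in> {m}"
            proof (rule ccontr)
              assume "v \<notin> {m}"
              then consider "v < m" | "v > m" by force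
              then show False
              proof cases
                case 1 then have "C1 v \<in> L' v" using C1(1) v st by auto
                then show False using v 1 unfolding C_def L'_def by auto
              next
                case 2 then have "C2 v \<in> L' v" using C2(1) v st by auto
                then show False using v 2 unfolding C_def L'_def by auto
              qed
            qed
          qed (use 1 in \<open>auto simp: C_def\<close>)
        qed
        then show ?thesis by (metis card.empty card_insert_disjoint empty_iff finite.emptyI One_nat_def)
      next
        case 2
        obtain i where "card ({s..t} \<inter> C1 -` {i}) = 1" using C1(2) st 2 by blast
        moreover have "{s..t} \<inter> C1 -` {i} = {s..t} \<inter> C -` {i}"
          using 2 unfolding C_def by auto
        ultimately show ?thesis by metis
      next
        case 3
        obtain i where "card ({s..t} \<inter> C2 -` {i}) = 1" using C2(2) st 3 by fastforce
        moreover have "{s..t} \<inter> C2 -` {i} = {s..t} \<inter> C -` {i}"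
          using 3 unfolding C_def by auto
        ultimately show ?thesis by metis
      qed
    qed
    show ?thesis using A B by blast
  qed
qed

theorem proposition2p1:
  fixes n :: nat
  assumes "n \<ge> 1"
  shows "cf_choosable {1..n} (interval_hypergraph_edges n) (nat \<lfloor>log 2 (real n)\<rfloor> + 1)"
proof -
  define f where "f = nat \<lfloor>log 2 (real n)\<rfloor>"
  have "\<lfloor>log 2 (real n)\<rfloor> \<ge> 0" using assms by simp
  hence "\<lfloor>log 2 (real n)\<rfloor> = int f" unfolding f_def by simp
  hence "n < 2 ^ (f + 1)"
    using floor_log_nat_eq_powr_iff[of 2 n f] assms by simp
  hence len: "Suc n - 1 < 2 ^ (f + 1)" by simp
  show ?thesis unfolding cf_choosable_def
  proof (intro allI impI)
    fix L :: "nat \<Rightarrow> nat set"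
    assume H: "\<forall>v\<in>{1..n}. L v \<subseteq> {0<..} \<and> (infinite (L v) \<or> nat \<lfloor>log 2 (real n)\<rfloor> + 1 \<le> card (L v))"
    have "\<forall>v\<in>{1..<Suc n}. infinite (L v) \<or> card (L v) \<ge> f + 1"
      using H unfolding f_def by auto
    then obtain C where C: "\<forall>v\<in>{1..<Suc n}. C v \<in> L v"
      "\<forall>s t. 1 \<le> s \<and> s \<le> t \<and> t < Suc n \<longrightarrow> (\<exists>i. card ({s..t} \<inter> C -` {i}) = 1)"
      using key[OF len] by blast
    have "conflict_free {1..n} (interval_hypergraph_edges n) C"
      unfolding conflict_free_def interval_hypergraph_edges_def
    proof (intro conjI ballI)
      fix v assume "v \<in> {1..n}"
      then show "C v > 0" using C(1) H by fastforce
    next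
      fix S assume "S \<in> {{s..t} |s t. 1 \<le> s \<and> s \<le> t \<and> t \<le> n}"
      then show "\<exists>i. card (S \<inter> C -` {i}) = 1" using C(2) by fastforce
    qed
    moreover have "colors_from {1..n} L C" unfolding colors_from_def using C(1) by auto
    ultimately show "\<exists>C. conflict_free {1..n} (interval_hypergraph_edges n) C \<and> colors_from {1..n} L C"
      by blast
  qed
qed

end
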